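(* For every positive integer $n$, $\mathcal M(n)\le\mathcal M(n+1)$.
   Context: An edge-magic labelling of a graph $G$ with $n$ vertices and $m$ edges is a bijection $l:V(G)\cup E(G)\to\{1,\dots,m+n\}$ such that $l(a)+l(b)+l(ab)$ is the same for all edges $ab$; $G$ is edge-magic if it admits one. $\mathcal M(n)$ denotes the maximum number of edges of an edge-magic graph with $n$ vertices. *)

theory Defs
  imports Main
begin

definition simple_graph :: "'a set \<Rightarrow> 'a set set \<Rightarrow> bool" where
  "simple_graph V E \<longleftrightarrow> finite V \<and> (\<forall>e\<in>E. e \<subseteq> V \<and> card e = 2)"

definition edge_magic_labelling :: "'a set \<Rightarrow> 'a set set \<Rightarrow> ('a + 'a set \<Rightarrow> nat) \<Rightarrow> bool" where
  "edge_magic_labelling V E l \<longleftrightarrow>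
     bij_betw l (Inl ` V \<union> Inr ` E) {1..card V + card E} \<and>
     (\<exists>k. \<forall>a\<in>V. \<forall>b\<in>V. {a, b} \<in> E \<longrightarrow> l (Inl a) + l (Inl b) + l (Inr {a, b}) = k)"

definition edge_magic :: "'a set \<Rightarrow> 'a set set \<Rightarrow> bool" where
  "edge_magic V E \<longleftrightarrow> simple_graph V E \<and> (\<exists>l. edge_magic_labelling V E l)"

text \<open>M(n): maximum number of edges of an edge-magic graph on n vertices
  (every n-vertex graph is isomorphic to one on the vertex set {0..<n}).\<close>
definition M :: "nat \<Rightarrow> nat" where
  "M n = Max {card E | E. edge_magic {..<n} E}"

end

theory Submission
  imports Defs
begin

lemma em_empty: "edge_magic {..<(n::nat)} ({} :: nat set set)"
proof -
  let ?l = "\<lambda>x::nat + nat set. case x of Inl i \<Rightarrow> Suc i | Inr _ \<Rightarrow> 0"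
  have "bij_betw Suc {..<n} {1..n}"
    by (rule bij_betw_byWitness[where f'="\<lambda>i. i - 1"]) auto
  hence "bij_betw (?l \<circ> Inl) {..<n} {1..n}" by (simp add: comp_def)
  moreover have "bij_betw Inl {..<n} (Inl ` {..<n} :: (nat + nat set) set)"
    by (simp add: bij_betw_imageI)
  ultimately have "bij_betw ?l (Inl ` {..<n}) {1..n}"
    using bij_betw_comp_iff by blast
  hence "edge_magic_labelling {..<n} {} ?l"
    unfolding edge_magic_labelling_def by simp
  thus ?thesis unfolding edge_magic_def simple_graph_def by blast
qed

lemma em_extend:
  assumes "edge_magic {..<n} (E :: nat set set)"
  shows "edge_magic {..<Suc n} E"
proof -
  have sg: "\<forall>e\<in>E. e \<subseteq> {..<n} \<and> card e = 2"
    using assms unfolding edge_magic_def simple_graph_def by blast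
  obtain l where l: "edge_magic_labelling {..<n} E l"
    using assms unfolding edge_magic_def by blast
  let ?N = "n + card E"
  let ?D = "Inl ` {..<n} \<union> Inr ` E :: (nat + nat set) set"
  have b: "bij_betw l ?D {1..?N}" using l unfolding edge_magic_labelling_def by simp
  obtain k where k: "\<forall>a\<in>{..<n}. \<forall>b\<in>{..<n}. {a, b} \<in> E \<longrightarrow> l (Inl a) + l (Inl b) + l (Inr {a, b}) = k"
    using l unfolding edge_magic_labelling_def by auto
  define l' where "l' = (\<lambda>x. if x = Inl n then 1 else l x + 1)"
  have bs: "bij_betw Suc {1..?N} {2..Suc ?N}"
    by (rule bij_betw_byWitness[where f'="\<lambda>i. i - 1"]) auto
  have "bij_betw (Suc \<circ> l) ?D {2..Suc ?N}" using bij_betw_trans[OF b bs] .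
  moreover have "\<And>x. x \<in> ?D \<Longrightarrow> l' x = (Suc \<circ> l) x" unfolding l'_def by auto
  ultimately have b1: "bij_betw l' ?D {2..Suc ?N}" using bij_betw_cong by blast
  have b2: "bij_betw l' {Inl n} {1}" unfolding l'_def by (simp add: bij_betw_def)
  have "bij_betw l' (?D \<union> {Inl n}) ({2..Suc ?N} \<union> {1})"
  proof -
    have "?D \<inter> {Inl n} = {}" "{2..Suc ?N} \<inter> {1} = {}" by auto
    from bij_betw_disjoint_Un[OF b1 b2 this] show ?thesis by simp
  qed
  moreover have "?D \<union> {Inl n} = Inl ` {..<Suc n} \<union> Inr ` E" by auto
  moreover have "{2..Suc ?N} \<union> {1} = {1..card {..<Suc n} + card E}" by auto
  ultimately have bb: "bij_betw l' (Inl ` {..<Suc n} \<union> Inr ` E) {1..card {..<Suc n} + card E}"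
    by simp
  have "\<forall>a\<in>{..<Suc n}. \<forall>b\<in>{..<Suc n}. {a, b} \<in> E \<longrightarrow> l' (Inl a) + l' (Inl b) + l' (Inr {a, b}) = k + 3"
  proof (intro ballI impI)
    fix a b assume "a \<in> {..<Suc n}" "b \<in> {..<Suc n}" "{a, b} \<in> E"
    then have "a < n" "b < n" using sg by auto
    thus "l' (Inl a) + l' (Inl b) + l' (Inr {a, b}) = k + 3"
      using k \<open>{a, b} \<in> E\<close> unfolding l'_def by auto
  qed
  with bb have "edge_magic_labelling {..<Suc n} E l'"
    unfolding edge_magic_labelling_def by blast
  moreover have "simple_graph {..<Suc n} E"
  proof -
    have "{..<n} \<subseteq> {..<Suc n}" by auto
    thus ?thesis using sg unfolding simple_graph_def by (meson finite_lessThan subset_trans)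
  qed
  ultimately show ?thesis unfolding edge_magic_def by blast
qed

lemma fin_M: "finite {card E | E. edge_magic {..<(m::nat)} (E :: nat set set)}"
proof -
  have "{card E | E. edge_magic {..<m} (E :: nat set set)} \<subseteq> {..card (Pow {..<m})}"
  proof
    fix x assume "x \<in> {card E | E. edge_magic {..<m} (E :: nat set set)}"
    then obtain E where "x = card E" "edge_magic {..<m} E" by blast
    then have "E \<subseteq> Pow {..<m}" unfolding edge_magic_def simple_graph_def by auto
    then have "card E \<le> card (Pow {..<m})" by (intro card_mono) auto
    thus "x \<in> {..card (Pow {..<m})}" using \<open>x = card E\<close> by simp
  qed
  thus ?thesis using finite_subset by blast
qed

theorem lemma2:
  fixes n :: nat
  assumes "n \<ge> 1"
  shows "M n \<le> M (n + 1)"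
proof -
  let ?S = "{card E | E. edge_magic {..<n} (E :: nat set set)}"
  let ?T = "{card E | E. edge_magic {..<n+1} (E :: nat set set)}"
  have ne: "?S \<noteq> {}" using em_empty[of n] by blast
  have sub: "?S \<subseteq> ?T" using em_extend by fastforce
  have "Max ?S \<in> ?S" using Max_in[OF fin_M ne] .
  hence "Max ?S \<in> ?T" using sub by blast
  hence "Max ?S \<le> Max ?T" using Max_ge[OF fin_M] by blast
  thus ?thesis unfolding M_def by simp
qed

end
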